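(* Let $\mathcal{M}=\langle S,\to,L\rangle$ be a labeled transition system and let $B\subseteq S\times S$ be a reduced well-founded skipping relation (RWFSK) on $\mathcal{M}$. Then $B$ is a skipping simulation (SKS) on $\mathcal{M}$.
   Context: A labeled transition system is $\mathcal{M}=\langle S,\to,L\rangle$ where $S$ is a non-empty (possibly infinite) set of states, $\to\subseteq S\times S$ is left-total (every state has a successor), and $L$ is a function with domain $S$. A fullpath is an infinite sequence $\sigma$ of states with $\sigma(i)\to\sigma(i+1)$ for all $i\in\omega$; "$\sigma$ is a fullpath starting at $s$" means additionally $\sigma(0)=s$. $w\to^{+}v$ means there is a finite path $w=v_0\to\cdots\to v_k=v$ with $k\ge1$. Matching: let $\mathit{INC}$ be the set of strictly increasing infinite sequences of natural numbers starting at $0$. For a fullpath $\sigma$ and $\pi\in\mathit{INC}$, the $i$-th segment of $\sigma$ w.r.t. $\pi$ is the finite sequence $\sigma(\pi(i)),\dots,\sigma(\pi(i+1)-1)$. For a relation $B$, fullpaths $\sigma,\delta$ and $\pi,\xi\in\mathit{INC}$, $\mathit{corr}(B,\sigma,\pi,\delta,\xi)$ holds iff for every $i\in\omega$ and every state $s$ in the $i$-th segment of $\sigma$ w.r.t. $\pi$, $sB\delta(\xi(i))$. $\mathit{match}(B,\sigma,\delta)$ holds iff there exist $\pi,\xi\in\mathit{INC}$ with $\mathit{corr}(B,\sigma,\pi,\delta,\xi)$. $B\subseteq S\times S$ is a skipping simulation (SKS) on $\mathcal{M}$ iff for all $s,w$ with $sBw$: (SKS1) $L(s)=L(w)$, and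 (SKS2) for every fullpath $\sigma$ starting at $s$ there is a fullpath $\delta$ starting at $w$ with $\mathit{match}(B,\sigma,\delta)$. $B$ is an RWFSK on $\mathcal{M}$ iff (RWFSK1) for all $s,w$ with $sBw$, $L(s)=L(w)$; and (RWFSK2) there exist a well-founded set $\langle W,\prec\rangle$ and a function $\mathit{rankt}:S\times S\to W$ such that for all $s,u,w\in S$ with $s\to u$ and $sBw$, either (a) $uBw$ and $\mathit{rankt}(u,w)\prec\mathit{rankt}(s,w)$, or (b) there is $v$ with $w\to^{+}v$ and $uBv$. *)

theory Defs
  imports Main
begin

text \<open>A labeled transition system with state type 's (the state set S is UNIV :: 's set,
  nonempty since HOL types are nonempty), transition relation R and labeling L.\<close>

definition left_total :: "('s \<Rightarrow> 's \<Rightarrow> bool) \<Rightarrow> bool" where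
  "left_total R \<longleftrightarrow> (\<forall>s. \<exists>t. R s t)"

definition fullpath :: "('s \<Rightarrow> 's \<Rightarrow> bool) \<Rightarrow> (nat \<Rightarrow> 's) \<Rightarrow> bool" where
  "fullpath R \<sigma> \<longleftrightarrow> (\<forall>i. R (\<sigma> i) (\<sigma> (Suc i)))"

definition plus_path :: "('s \<Rightarrow> 's \<Rightarrow> bool) \<Rightarrow> 's \<Rightarrow> 's \<Rightarrow> bool" where
  "plus_path R w v \<longleftrightarrow> (\<exists>k::nat. k \<ge> 1 \<and> (\<exists>p::nat \<Rightarrow> 's. p 0 = w \<and> p k = v \<and> (\<forall>i<k. R (p i) (p (Suc i)))))"

definition INC :: "(nat \<Rightarrow> nat) set" where
  "INC = {\<pi>. strict_mono \<pi> \<and> \<pi> 0 = 0}"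

definition corr :: "('s \<times> 's) set \<Rightarrow> (nat \<Rightarrow> 's) \<Rightarrow> (nat \<Rightarrow> nat) \<Rightarrow> (nat \<Rightarrow> 's) \<Rightarrow> (nat \<Rightarrow> nat) \<Rightarrow> bool" where
  "corr B \<sigma> \<pi> \<delta> \<xi> \<longleftrightarrow> (\<forall>i j. \<pi> i \<le> j \<and> j < \<pi> (Suc i) \<longrightarrow> (\<sigma> j, \<delta> (\<xi> i)) \<in> B)"

definition match :: "('s \<times> 's) set \<Rightarrow> (nat \<Rightarrow> 's) \<Rightarrow> (nat \<Rightarrow> 's) \<Rightarrow> bool" where
  "match B \<sigma> \<delta> \<longleftrightarrow> (\<exists>\<pi>\<in>INC. \<exists>\<xi>\<in>INC. corr B \<sigma> \<pi> \<delta> \<xi>)"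

definition SKS :: "('s \<Rightarrow> 's \<Rightarrow> bool) \<Rightarrow> ('s \<Rightarrow> 'l) \<Rightarrow> ('s \<times> 's) set \<Rightarrow> bool" where
  "SKS R L B \<longleftrightarrow> (\<forall>s w. (s, w) \<in> B \<longrightarrow>
      L s = L w \<and>
      (\<forall>\<sigma>. fullpath R \<sigma> \<and> \<sigma> 0 = s \<longrightarrow>
         (\<exists>\<delta>. fullpath R \<delta> \<and> \<delta> 0 = w \<and> match B \<sigma> \<delta>)))"

text \<open>RWFSK, with the well-founded set given by the carrier type 'w and a well-founded
  relation W on it (strict order: (x, y) \<in> W means x \<prec> y).  The type 'w is a parameter;
  the existential over the well-founded set becomes a universally quantified type variable in
  an assumption (equivalently an existential).\<close>
definition RWFSK :: "('s \<Rightarrow> 's \<Rightarrow> bool) \<Rightarrow> ('s \<Rightarrow> 'l) \<Rightarrow> ('s \<times> 's) set \<Rightarrow> ('w \<times> 'w) set \<Rightarrow> ('s \<Rightarrow> 's \<Rightarrow> 'w) \<Rightarrow> bool" where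
  "RWFSK R L B W rankt \<longleftrightarrow>
     (\<forall>s w. (s, w) \<in> B \<longrightarrow> L s = L w) \<and>
     wf W \<and>
     (\<forall>s u w. R s u \<and> (s, w) \<in> B \<longrightarrow>
        ((u, w) \<in> B \<and> (rankt u w, rankt s w) \<in> W) \<or>
        (\<exists>v. plus_path R w v \<and> (u, v) \<in> B))"

end

theory Submission
  imports Defs
begin

lemma block_ex:
  assumes "strict_mono (xi::nat\<Rightarrow>nat)" "xi 0 = 0"
  shows "\<exists>n. xi n \<le> i \<and> i < xi (Suc n)"
proof (induction i)
  case 0
  have "xi 0 < xi (Suc 0)" using assms(1) by (simp add: strict_mono_def)
  thus ?case using assms by (intro exI[of _ 0]) auto
next
  case (Suc i)
  then obtain n where n: "xi n \<le> i" "i < xi (Suc n)" by blast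
  show ?case
  proof (cases "Suc i < xi (Suc n)")
    case True thus ?thesis using n by (intro exI[of _ n]) auto
  next
    case False
    hence "Suc i = xi (Suc n)" using n by auto
    moreover have "xi (Suc n) < xi (Suc (Suc n))" using assms(1) by (simp add: strict_mono_def)
    ultimately show ?thesis by (intro exI[of _ "Suc n"]) auto
  qed
qed

lemma block_uniq:
  assumes "strict_mono (xi::nat\<Rightarrow>nat)" "xi n \<le> i" "i < xi (Suc n)" "xi n' \<le> i" "i < xi (Suc n')"
  shows "n = n'"
proof (rule ccontr)
  assume "n \<noteq> n'"
  then consider "Suc n \<le> n'" | "Suc n' \<le> n" by linarith
  thus False
  proof cases
    case 1 hence "xi (Suc n) \<le> xi n'" using assms(1) by (simp add: strict_mono_less_eq)
    thus False using assms by linarith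
  next
    case 2 hence "xi (Suc n') \<le> xi n" using assms(1) by (simp add: strict_mono_less_eq)
    thus False using assms by linarith
  qed
qed

lemma key:
  assumes wf: "wf W"
    and step: "\<forall>s u w. R s u \<and> (s,w)\<in>B \<longrightarrow> ((u,w)\<in>B \<and> (rankt u w, rankt s w)\<in>W) \<or> (\<exists>v. plus_path R w v \<and> (u,v)\<in>B)"
    and fpa: "fullpath R \<sigma>"
  shows "\<forall>j w. rankt (\<sigma> j) w = x \<longrightarrow> (\<sigma> j, w) \<in> B \<longrightarrow> (\<exists>k v m p. j < k \<and> 1 \<le> m \<and> p 0 = w \<and> p m = v \<and> (\<forall>i<m. R (p i) (p (Suc i))) \<and> (\<sigma> k, v) \<in> B \<and> (\<forall>i. j \<le> i \<and> i < k \<longrightarrow> (\<sigma> i, w) \<in> B))"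
proof (induction x rule: wf_induct[OF wf])
  case (1 x)
  show ?case
  proof (intro allI impI)
    fix j w assume rk: "rankt (\<sigma> j) w = x" and jw: "(\<sigma> j, w) \<in> B"
    have Rj: "R (\<sigma> j) (\<sigma> (Suc j))" using fpa by (simp add: fullpath_def)
    from step Rj jw have "((\<sigma> (Suc j),w)\<in>B \<and> (rankt (\<sigma> (Suc j)) w, rankt (\<sigma> j) w)\<in>W) \<or> (\<exists>v. plus_path R w v \<and> (\<sigma> (Suc j),v)\<in>B)" by blast
    then consider (a) "(\<sigma> (Suc j),w)\<in>B" "(rankt (\<sigma> (Suc j)) w, rankt (\<sigma> j) w)\<in>W"
      | (b) v where "plus_path R w v" "(\<sigma> (Suc j),v)\<in>B" by blast
    thus "\<exists>k v m p. j < k \<and> 1 \<le> m \<and> p 0 = w \<and> p m = v \<and> (\<forall>i<m. R (p i) (p (Suc i))) \<and> (\<sigma> k, v) \<in> B \<and> (\<forall>i. j \<le> i \<and> i < k \<longrightarrow> (\<sigma> i, w) \<in> B)"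
    proof cases
      case a
      with 1 rk have "\<forall>j' w'. rankt (\<sigma> j') w' = rankt (\<sigma> (Suc j)) w \<longrightarrow> (\<sigma> j', w') \<in> B \<longrightarrow> (\<exists>k v m p. j' < k \<and> 1 \<le> m \<and> p 0 = w' \<and> p m = v \<and> (\<forall>i<m. R (p i) (p (Suc i))) \<and> (\<sigma> k, v) \<in> B \<and> (\<forall>i. j' \<le> i \<and> i < k \<longrightarrow> (\<sigma> i, w') \<in> B))"
        by blast
      then obtain k v m p where H: "Suc j < k" "1 \<le> m" "p 0 = w" "p m = v" "\<forall>i<m. R (p i) (p (Suc i))" "(\<sigma> k, v) \<in> B" "\<forall>i. Suc j \<le> i \<and> i < k \<longrightarrow> (\<sigma> i, w) \<in> B"
        using a(1) by blast
      have "\<forall>i. j \<le> i \<and> i < k \<longrightarrow> (\<sigma> i, w) \<in> B"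
      proof (intro allI impI)
        fix i assume "j \<le> i \<and> i < k"
        thus "(\<sigma> i, w) \<in> B" using H(7) jw by (cases "i = j") auto
      qed
      thus ?thesis using H by (intro exI[of _ k] exI[of _ v] exI[of _ m] exI[of _ p]) auto
    next
      case (b v)
      then obtain m p where H: "m \<ge> 1" "p 0 = w" "p m = v" "\<forall>i<m. R (p i) (p (Suc i))"
        unfolding plus_path_def by blast
      have "\<forall>i. j \<le> i \<and> i < Suc j \<longrightarrow> (\<sigma> i, w) \<in> B" using jw by (metis le_antisym less_Suc_eq_le)
      thus ?thesis using H b by (intro exI[of _ "Suc j"] exI[of _ v] exI[of _ m] exI[of _ p]) auto
    qed
  qed
qed

theorem theorem2:
  fixes R :: "'s \<Rightarrow> 's \<Rightarrow> bool" and L :: "'s \<Rightarrow> 'l" and B :: "('s \<times> 's) set"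
    and W :: "('w \<times> 'w) set" and rankt :: "'s \<Rightarrow> 's \<Rightarrow> 'w"
  assumes "left_total R"
    and "RWFSK R L B W rankt"
  shows "SKS R L B"
  unfolding SKS_def
proof (intro allI impI conjI)
  have lab: "\<forall>s w. (s, w) \<in> B \<longrightarrow> L s = L w" and wf: "wf W" and
    step: "\<forall>s u w. R s u \<and> (s,w)\<in>B \<longrightarrow> ((u,w)\<in>B \<and> (rankt u w, rankt s w)\<in>W) \<or> (\<exists>v. plus_path R w v \<and> (u,v)\<in>B)"
    using assms(2) unfolding RWFSK_def by blast+
  fix s w assume sw: "(s, w) \<in> B"
  show "L s = L w" using lab sw by blast
  fix \<sigma> assume fs: "fullpath R \<sigma> \<and> \<sigma> 0 = s"
  have K: "\<forall>j w. (\<sigma> j, w) \<in> B \<longrightarrow> (\<exists>k v m p. j < k \<and> 1 \<le> m \<and> p 0 = w \<and> p m = v \<and> (\<forall>i<m. R (p i) (p (Suc i))) \<and> (\<sigma> k, v) \<in> B \<and> (\<forall>i. j \<le> i \<and> i < k \<longrightarrow> (\<sigma> i, w) \<in> B))"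
    using key[OF wf step, of \<sigma>] fs by blast
  obtain fk fv fm fp where H: "\<And>j w. (\<sigma> j, w) \<in> B \<Longrightarrow> j < fk j w \<and> 1 \<le> fm j w \<and> fp j w 0 = w \<and> fp j w (fm j w) = fv j w \<and> (\<forall>i<fm j w. R (fp j w i) (fp j w (Suc i))) \<and> (\<sigma> (fk j w), fv j w) \<in> B \<and> (\<forall>i. j \<le> i \<and> i < fk j w \<longrightarrow> (\<sigma> i, w) \<in> B)"
    using K by metis
  define st where "st = rec_nat (0, w) (\<lambda>_ (j,v). (fk j v, fv j v))"
  define J where "J n = fst (st n)" for n
  define V where "V n = snd (st n)" for n
  have J0: "J 0 = 0" and V0: "V 0 = w" by (simp_all add: J_def V_def st_def)
  have JS: "J (Suc n) = fk (J n) (V n)" and VS: "V (Suc n) = fv (J n) (V n)" for n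
    by (simp_all add: J_def V_def st_def split: prod.split)
  have inv: "(\<sigma> (J n), V n) \<in> B" for n
  proof (induction n)
    case 0 thus ?case using J0 V0 fs sw by simp
  next
    case (Suc n) thus ?case using H[OF Suc] JS VS by simp
  qed
  define M where "M n = fm (J n) (V n)" for n
  define PP where "PP n = fp (J n) (V n)" for n
  have M1: "1 \<le> M n" for n using H[OF inv[of n]] by (simp add: M_def)
  have PP0: "PP n 0 = V n" for n using H[OF inv[of n]] by (simp add: PP_def)
  have PPM: "PP n (M n) = V (Suc n)" for n using H[OF inv[of n]] by (simp add: PP_def M_def VS)
  have PPR: "i < M n \<Longrightarrow> R (PP n i) (PP n (Suc i))" for n i using H[OF inv[of n]] by (simp add: PP_def M_def)
  have seg: "J n \<le> i \<Longrightarrow> i < J (Suc n) \<Longrightarrow> (\<sigma> i, V n) \<in> B" for n i using H[OF inv[of n]] by (simp add: JS)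
  have Jmono: "strict_mono J" unfolding strict_mono_Suc_iff using H[OF inv] by (simp add: JS)
  define X where "X n = (\<Sum>i<n. M i)" for n
  have X0: "X 0 = 0" by (simp add: X_def)
  have XS: "X (Suc n) = X n + M n" for n by (simp add: X_def)
  have Xmono: "strict_mono X" unfolding strict_mono_Suc_iff proof
    fix n show "X n < X (Suc n)" using XS[of n] M1[of n] by simp
  qed
  define N where "N i = (THE n. X n \<le> i \<and> i < X (Suc n))" for i
  have Nval: "X n \<le> i \<Longrightarrow> i < X (Suc n) \<Longrightarrow> N i = n" for n i
    unfolding N_def by (rule the_equality) (auto intro: block_uniq[OF Xmono])
  define \<delta> where "\<delta> i = PP (N i) (i - X (N i))" for i
  have \<delta>X: "\<delta> (X n) = V n" for n
  proof -
    have "N (X n) = n" using Nval[of n "X n"] Xmono by (simp add: strict_mono_def)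
    thus ?thesis by (simp add: \<delta>_def PP0)
  qed
  have "fullpath R \<delta>"
    unfolding fullpath_def
  proof
    fix i
    obtain n where n: "X n \<le> i" "i < X (Suc n)" using block_ex[OF Xmono X0] by blast
    have Ni: "N i = n" using Nval n by blast
    show "R (\<delta> i) (\<delta> (Suc i))"
    proof (cases "Suc i < X (Suc n)")
      case True
      hence "N (Suc i) = n" using Nval n by simp
      hence "\<delta> (Suc i) = PP n (Suc (i - X n))" using n by (simp add: \<delta>_def Suc_diff_le)
      moreover have "i - X n < M n" using n XS by simp
      ultimately show ?thesis using PPR Ni \<delta>_def by simp
    next
      case False
      hence e: "Suc i = X (Suc n)" using n by simp
      hence "\<delta> (Suc i) = V (Suc n)" using \<delta>X by simp
      also have "\<dots> = PP n (Suc (i - X n))" proof -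
        have "Suc (i - X n) = M n" using e XS[of n] n by simp
        thus ?thesis using PPM[of n] by simp
      qed
      finally have "\<delta> (Suc i) = PP n (Suc (i - X n))" .
      moreover have "i - X n < M n" using n XS by simp
      ultimately show ?thesis using PPR Ni \<delta>_def by simp
    qed
  qed
  moreover have "\<delta> 0 = w" using \<delta>X[of 0] X0 V0 by simp
  moreover have "match B \<sigma> \<delta>"
  proof -
    have "J \<in> INC" using Jmono J0 by (simp add: INC_def)
    moreover have "X \<in> INC" using Xmono X0 by (simp add: INC_def)
    moreover have "corr B \<sigma> J \<delta> X" unfolding corr_def using seg \<delta>X by simp
    ultimately show ?thesis unfolding match_def by blast
  qed
  ultimately show "\<exists>\<delta>. fullpath R \<delta> \<and> \<delta> 0 = w \<and> match B \<sigma> \<delta>" by blast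
qed

end
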